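(* Let $A=[A_1,\dots,A_n]\in\mathbb{R}^{p\times n}$ satisfy $A\mathbf{1}=\mathbf{0}$, and let $r$ be a positive integer with $r\le \operatorname{rank}(A)$. Let $A=U\Sigma V$ be the compact SVD of $A$ with singular values in descending order, where $V$ has orthonormal rows, and let $V_{1:r}$ denote the first $r$ rows of $V$. Put $\beta=-\min_{i,j}(A^TA)_{ij}$, $\tilde A=\begin{bmatrix}\sqrt{\beta}\,\mathbf{1}^T\\ A\end{bmatrix}$, $W=\tilde A^T\tilde A$ and $L=\operatorname{diag}(W\mathbf{1})-W$. Then $W$ has nonnegative entries, $W_{ij}=\phi(A_i,A_j)$ for the linear kernel $\phi(A_i,A_j)=A_i^TA_j+\beta$, and $L$ is its graph Laplacian. Moreover, the PCA problem $$\min_{D\in\mathbb{R}^{p\times r},\,X\in\mathbb{R}^{r\times n}}\|A-DX\|_F^2\quad\text{s.t. } XX^T=I$$ and the Laplacian-eigenmap problem $$\min_{X\in\mathbb{R}^{r\times n}}\operatorname{tr}\{\tilde XL\tilde X^T\}\quad\text{s.t. }\tilde X=\begin{bmatrix}\tfrac{1}{\sqrt n}\mathbf{1}^T\\ X\end{bmatrix},\ \tilde X\tilde X^T=I$$ have the same solutions $X$; in particular $X=V_{1:r}$ is a common solution.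
   Context: $\mathbf{1}$ denotes the all-ones vector of the appropriate length and $\operatorname{diag}(v)$ the diagonal matrix with diagonal $v$. Columns of $A$ are the $n$ data samples. *)

theory Defs
  imports "Jordan_Normal_Form.DL_Rank"
begin

definition mtrace :: "real mat \<Rightarrow> real" where
  "mtrace M = (\<Sum>i<dim_row M. M $$ (i,i))"

definition frob_sq :: "real mat \<Rightarrow> real" where
  "frob_sq M = (\<Sum>i<dim_row M. \<Sum>j<dim_col M. (M $$ (i,j))\<^sup>2)"

definition ones_vec :: "nat \<Rightarrow> real vec" where
  "ones_vec n = vec n (\<lambda>_. 1)"

definition graph_laplacian :: "real mat \<Rightarrow> real mat" where
  "graph_laplacian W = mat_diag (dim_row W) (\<lambda>i. (W *\<^sub>v ones_vec (dim_col W)) $ i) - W"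

definition compact_svd :: "nat \<Rightarrow> nat \<Rightarrow> real mat \<Rightarrow> real mat \<Rightarrow> real mat \<Rightarrow> real mat \<Rightarrow> bool" where
  "compact_svd p n A U S V \<longleftrightarrow>
     (let k = vec_space.rank p A in
      U \<in> carrier_mat p k \<and> S \<in> carrier_mat k k \<and> V \<in> carrier_mat k n \<and>
      transpose_mat U * U = 1\<^sub>m k \<and> V * transpose_mat V = 1\<^sub>m k \<and>
      (\<forall>i<k. \<forall>j<k. i \<noteq> j \<longrightarrow> S $$ (i,j) = 0) \<and>
      (\<forall>i<k. S $$ (i,i) > 0) \<and>
      (\<forall>i<k. \<forall>j<k. i \<le> j \<longrightarrow> S $$ (j,j) \<le> S $$ (i,i)) \<and>
      A = U * S * V)"

definition first_rows :: "nat \<Rightarrow> real mat \<Rightarrow> real mat" where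
  "first_rows r V = mat r (dim_col V) (\<lambda>(i,j). V $$ (i,j))"

definition beta_of :: "real mat \<Rightarrow> real" where
  "beta_of A = - Min {(transpose_mat A * A) $$ (i,j) | i j. i < dim_col A \<and> j < dim_col A}"

definition A_tilde :: "real mat \<Rightarrow> real mat" where
  "A_tilde A = mat (dim_row A + 1) (dim_col A)
     (\<lambda>(i,j). if i = 0 then sqrt (beta_of A) else A $$ (i - 1, j))"

definition X_tilde :: "nat \<Rightarrow> real mat \<Rightarrow> real mat" where
  "X_tilde n X = mat (dim_row X + 1) n
     (\<lambda>(i,j). if i = 0 then 1 / sqrt (real n) else X $$ (i - 1, j))"

definition pca_solution :: "nat \<Rightarrow> nat \<Rightarrow> nat \<Rightarrow> real mat \<Rightarrow> real mat \<Rightarrow> bool" where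
  "pca_solution p n r A X \<longleftrightarrow>
     X \<in> carrier_mat r n \<and> X * transpose_mat X = 1\<^sub>m r \<and>
     (\<exists>D \<in> carrier_mat p r.
        \<forall>D' \<in> carrier_mat p r. \<forall>X' \<in> carrier_mat r n. X' * transpose_mat X' = 1\<^sub>m r \<longrightarrow>
          frob_sq (A - D * X) \<le> frob_sq (A - D' * X'))"

definition le_solution :: "nat \<Rightarrow> nat \<Rightarrow> real mat \<Rightarrow> real mat \<Rightarrow> bool" where
  "le_solution n r L X \<longleftrightarrow>
     X \<in> carrier_mat r n \<and> X_tilde n X * transpose_mat (X_tilde n X) = 1\<^sub>m (r + 1) \<and>
     (\<forall>X' \<in> carrier_mat r n. X_tilde n X' * transpose_mat (X_tilde n X') = 1\<^sub>m (r + 1) \<longrightarrow>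
        mtrace (X_tilde n X * L * transpose_mat (X_tilde n X))
          \<le> mtrace (X_tilde n X' * L * transpose_mat (X_tilde n X')))"

end

theory Submission
  imports Defs
begin


lemma orth_expand:
  fixes u :: "nat \<Rightarrow> nat \<Rightarrow> real" and y :: "nat \<Rightarrow> real"
  assumes "\<And>l m. l < k \<Longrightarrow> m < k \<Longrightarrow> (\<Sum>a<p. u a l * u a m) = (if l = m then 1 else 0)"
  shows "(\<Sum>a<p. (\<Sum>l<k. u a l * y l)\<^sup>2) = (\<Sum>l<k. (y l)\<^sup>2)"
proof -
  have "(\<Sum>a<p. (\<Sum>l<k. u a l * y l)\<^sup>2) = (\<Sum>a<p. \<Sum>l<k. \<Sum>m<k. y l * y m * (u a l * u a m))"
    by (simp add: power2_eq_square sum_product algebra_simps)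
  also have "\<dots> = (\<Sum>l<k. \<Sum>m<k. y l * y m * (\<Sum>a<p. u a l * u a m))"
    by (simp add: sum_distrib_left sum.swap[of _ "{..<p}"])
  also have "\<dots> = (\<Sum>l<k. \<Sum>m<k. y l * y m * (if l = m then 1 else 0))"
    by (intro sum.cong refl) (simp add: assms)
  also have "\<dots> = (\<Sum>l<k. (y l)\<^sup>2)"
    by (simp add: power2_eq_square if_distrib sum.delta cong: if_cong)
  finally show ?thesis .
qed

lemma proj_expand:
  fixes e :: "nat \<Rightarrow> nat \<Rightarrow> real" and x d :: "nat \<Rightarrow> real"
  assumes "\<And>l m. l < r \<Longrightarrow> m < r \<Longrightarrow> (\<Sum>j<n. e l j * e m j) = (if l = m then 1 else 0)"
  shows "(\<Sum>j<n. (x j - (\<Sum>b<r. d b * e b j))\<^sup>2)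
       = (\<Sum>j<n. (x j)\<^sup>2) - (\<Sum>b<r. (\<Sum>j<n. e b j * x j)\<^sup>2) + (\<Sum>b<r. (d b - (\<Sum>j<n. e b j * x j))\<^sup>2)"
proof -
  have 1: "(\<Sum>j<n. (\<Sum>b<r. d b * e b j)\<^sup>2) = (\<Sum>b<r. (d b)\<^sup>2)"
    using orth_expand[where k=r and p=n and u="\<lambda>j b. e b j" and y=d] assms by (simp add: mult.commute)
  have 2: "(\<Sum>j<n. x j * (\<Sum>b<r. d b * e b j)) = (\<Sum>b<r. d b * (\<Sum>j<n. e b j * x j))"
    by (simp add: sum_distrib_left sum.swap[of _ "{..<n}"] algebra_simps)
  have "(\<Sum>j<n. (x j - (\<Sum>b<r. d b * e b j))\<^sup>2) = (\<Sum>j<n. (x j)\<^sup>2) - 2 * (\<Sum>j<n. x j * (\<Sum>b<r. d b * e b j)) + (\<Sum>j<n. (\<Sum>b<r. d b * e b j)\<^sup>2)"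
    by (simp add: power2_diff sum.distrib sum_subtractf sum_distrib_left mult.assoc)
  also have "\<dots> = (\<Sum>j<n. (x j)\<^sup>2) - 2 * (\<Sum>b<r. d b * (\<Sum>j<n. e b j * x j)) + (\<Sum>b<r. (d b)\<^sup>2)"
    using 1 2 by simp
  also have "\<dots> = (\<Sum>j<n. (x j)\<^sup>2) - (\<Sum>b<r. (\<Sum>j<n. e b j * x j)\<^sup>2) + (\<Sum>b<r. (d b - (\<Sum>j<n. e b j * x j))\<^sup>2)"
    by (simp add: power2_diff sum.distrib sum_subtractf sum_distrib_left algebra_simps)
  finally show ?thesis .
qed

lemma rearr:
  fixes t w :: "nat \<Rightarrow> real"
  assumes "0 < r" "r \<le> k" "\<And>l. l < k \<Longrightarrow> 0 \<le> w l \<and> w l \<le> 1"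
    "\<And>i j. i \<le> j \<Longrightarrow> j < k \<Longrightarrow> t j \<le> t i"
  shows "(\<Sum>l<k. t l * w l) \<le> (\<Sum>l<r. t l) - t (r - 1) * (real r - (\<Sum>l<k. w l))"
proof -
  have sp: "{..<k} = {..<r} \<union> {r..<k}" using assms by auto
  have d: "{..<r} \<inter> {r..<k} = {}" by auto
  have a: "(\<Sum>l<r. t (r - 1) * (1 - w l)) \<le> (\<Sum>l<r. t l * (1 - w l))"
    using assms by (intro sum_mono mult_right_mono) auto
  have b: "(\<Sum>l\<in>{r..<k}. t l * w l) \<le> (\<Sum>l\<in>{r..<k}. t (r - 1) * w l)"
    using assms by (intro sum_mono mult_right_mono) auto
  have "(\<Sum>l<k. t l * w l) = (\<Sum>l<r. t l * w l) + (\<Sum>l\<in>{r..<k}. t l * w l)"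
    by (simp add: sp sum.union_disjoint d)
  moreover have "(\<Sum>l<k. w l) = (\<Sum>l<r. w l) + (\<Sum>l\<in>{r..<k}. w l)"
    by (simp add: sp sum.union_disjoint d)
  moreover have "(\<Sum>l<r. t l * (1 - w l)) = (\<Sum>l<r. t l) - (\<Sum>l<r. t l * w l)"
    by (simp add: algebra_simps sum_subtractf)
  moreover have "(\<Sum>l<r. t (r - 1) * (1 - w l)) = t (r - 1) * real r - t (r-1) * (\<Sum>l<r. w l)"
    by (simp add: algebra_simps sum_subtractf sum_distrib_left sum_distrib_right)
  moreover have "(\<Sum>l\<in>{r..<k}. t (r - 1) * w l) = t (r-1) * (\<Sum>l\<in>{r..<k}. w l)"
    by (simp add: sum_distrib_left)
  ultimately show ?thesis using a b by (simp add: algebra_simps)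
qed



lemma sq0: "((x::real) - y)\<^sup>2 = 0 \<Longrightarrow> x = y"
  by (metis power_eq_0_iff right_minus_eq)

lemma bessel:
  fixes e :: "nat \<Rightarrow> nat \<Rightarrow> real" and x :: "nat \<Rightarrow> real"
  assumes "\<And>l m. l < r \<Longrightarrow> m < r \<Longrightarrow> (\<Sum>j<n. e l j * e m j) = (if l = m then 1 else 0)"
  shows "(\<Sum>j<n. (x j - (\<Sum>b<r. (\<Sum>j<n. e b j * x j) * e b j))\<^sup>2)
       = (\<Sum>j<n. (x j)\<^sup>2) - (\<Sum>b<r. (\<Sum>j<n. e b j * x j)\<^sup>2)"
  using proj_expand[where e=e and r=r and n=n and x=x and d="\<lambda>b. \<Sum>j<n. e b j * x j"] assms
  by simp

lemma bessel_le:
  fixes e :: "nat \<Rightarrow> nat \<Rightarrow> real" and x :: "nat \<Rightarrow> real"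
  assumes "\<And>l m. l < r \<Longrightarrow> m < r \<Longrightarrow> (\<Sum>j<n. e l j * e m j) = (if l = m then 1 else 0)"
  shows "(\<Sum>b<r. (\<Sum>j<n. e b j * x j)\<^sup>2) \<le> (\<Sum>j<n. (x j)\<^sup>2)"
proof -
  have "0 \<le> (\<Sum>j<n. (x j - (\<Sum>b<r. (\<Sum>j<n. e b j * x j) * e b j))\<^sup>2)"
    by (intro sum_nonneg) auto
  thus ?thesis using bessel[OF assms] by simp
qed

locale kf =
  fixes A U V X :: "nat \<Rightarrow> nat \<Rightarrow> real" and s :: "nat \<Rightarrow> real" and p n k r :: nat
  assumes UtU: "\<And>l m. l < k \<Longrightarrow> m < k \<Longrightarrow> (\<Sum>a<p. U a l * U a m) = (if l = m then 1 else 0)"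
    and VVt: "\<And>l m. l < k \<Longrightarrow> m < k \<Longrightarrow> (\<Sum>j<n. V l j * V m j) = (if l = m then 1 else 0)"
    and Aent: "\<And>a j. a < p \<Longrightarrow> j < n \<Longrightarrow> A a j = (\<Sum>l<k. U a l * s l * V l j)"
    and Xo: "\<And>b c. b < r \<Longrightarrow> c < r \<Longrightarrow> (\<Sum>j<n. X b j * X c j) = (if b = c then 1 else 0)"
    and spos: "\<And>l. l < k \<Longrightarrow> 0 < s l"
    and sdesc: "\<And>i j. i \<le> j \<Longrightarrow> j < k \<Longrightarrow> s j \<le> s i"
    and rpos: "0 < r" and rk: "r \<le> k"
begin

definition w where "w l = (\<Sum>b<r. (\<Sum>j<n. V l j * X b j)\<^sup>2)"

lemma inner: "b < r \<Longrightarrow> (\<Sum>a<p. (\<Sum>j<n. A a j * X b j)\<^sup>2) = (\<Sum>l<k. (s l)\<^sup>2 * (\<Sum>j<n. V l j * X b j)\<^sup>2)"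
proof -
  have e: "(\<Sum>j<n. A a j * X b j) = (\<Sum>l<k. U a l * (s l * (\<Sum>j<n. V l j * X b j)))" if a: "a < p" for a
  proof -
    have "(\<Sum>j<n. A a j * X b j) = (\<Sum>j<n. \<Sum>l<k. U a l * s l * V l j * X b j)"
      using a by (intro sum.cong refl) (simp add: Aent sum_distrib_right)
    also have "\<dots> = (\<Sum>l<k. U a l * (s l * (\<Sum>j<n. V l j * X b j)))"
      by (subst sum.swap) (simp add: sum_distrib_left mult.assoc)
    finally show ?thesis .
  qed
  have "(\<Sum>a<p. (\<Sum>j<n. A a j * X b j)\<^sup>2) = (\<Sum>a<p. (\<Sum>l<k. U a l * (s l * (\<Sum>j<n. V l j * X b j)))\<^sup>2)"
    by (rule sum.cong[OF refl]) (simp add: e)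
  also have "\<dots> = (\<Sum>l<k. (s l * (\<Sum>j<n. V l j * X b j))\<^sup>2)"
    by (rule orth_expand) (rule UtU)
  finally show ?thesis by (simp add: power_mult_distrib)
qed

lemma gform: "(\<Sum>a<p. \<Sum>b<r. (\<Sum>j<n. A a j * X b j)\<^sup>2) = (\<Sum>l<k. (s l)\<^sup>2 * w l)"
proof -
  have "(\<Sum>a<p. \<Sum>b<r. (\<Sum>j<n. A a j * X b j)\<^sup>2) = (\<Sum>b<r. \<Sum>a<p. (\<Sum>j<n. A a j * X b j)\<^sup>2)"
    by (rule sum.swap)
  also have "\<dots> = (\<Sum>b<r. \<Sum>l<k. (s l)\<^sup>2 * (\<Sum>j<n. V l j * X b j)\<^sup>2)"
    by (rule sum.cong[OF refl], rule inner, simp)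
  also have "\<dots> = (\<Sum>l<k. (s l)\<^sup>2 * w l)"
    by (subst sum.swap) (simp add: w_def sum_distrib_left)
  finally show ?thesis .
qed

lemma w_bounds: "l < k \<Longrightarrow> 0 \<le> w l \<and> w l \<le> 1"
proof
  assume l: "l < k"
  show "0 \<le> w l" unfolding w_def by (intro sum_nonneg) auto
  have "(\<Sum>b<r. (\<Sum>j<n. X b j * V l j)\<^sup>2) \<le> (\<Sum>j<n. (V l j)\<^sup>2)"
    by (rule bessel_le) (rule Xo)
  also have "\<dots> = 1" using VVt[OF l l] by (simp add: power2_eq_square)
  finally show "w l \<le> 1" unfolding w_def by (simp add: mult.commute)
qed

lemma row_norm: "b < r \<Longrightarrow> (\<Sum>j<n. (X b j)\<^sup>2) = 1"
  using Xo[of b b] by (simp add: power2_eq_square)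

lemma wsum: "(\<Sum>l<k. w l) = real r - (\<Sum>b<r. \<Sum>j<n. (X b j - (\<Sum>l<k. (\<Sum>j<n. V l j * X b j) * V l j))\<^sup>2)"
proof -
  have "(\<Sum>b<r. \<Sum>j<n. (X b j - (\<Sum>l<k. (\<Sum>j<n. V l j * X b j) * V l j))\<^sup>2)
      = (\<Sum>b<r. 1 - (\<Sum>l<k. (\<Sum>j<n. V l j * X b j)\<^sup>2))"
    by (intro sum.cong refl) (simp add: bessel[OF VVt] row_norm)
  also have "\<dots> = real r - (\<Sum>l<k. w l)"
    by (simp add: sum_subtractf w_def sum.swap[of _ "{..<k}"])
  finally show ?thesis by simp
qed

lemma wsum_le: "(\<Sum>l<k. w l) \<le> real r"
  unfolding wsum by (simp add: sum_nonneg)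

lemma sq_desc: "i \<le> j \<Longrightarrow> j < k \<Longrightarrow> (s j)\<^sup>2 \<le> (s i)\<^sup>2"
  using spos sdesc by (intro power_mono) (auto intro: less_imp_le)

lemma bound: "(\<Sum>l<k. (s l)\<^sup>2 * w l) \<le> (\<Sum>l<r. (s l)\<^sup>2) - (s (r - 1))\<^sup>2 * (real r - (\<Sum>l<k. w l))"
  by (rule rearr[OF rpos rk w_bounds sq_desc])

theorem kyfan: "(\<Sum>a<p. \<Sum>b<r. (\<Sum>j<n. A a j * X b j)\<^sup>2) \<le> (\<Sum>l<r. (s l)\<^sup>2)"
proof -
  have "0 \<le> (s (r - 1))\<^sup>2 * (real r - (\<Sum>l<k. w l))" using wsum_le by simp
  thus ?thesis using bound gform by linarith
qed

theorem kyfan_eq: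
  assumes Vc: "\<And>l. l < k \<Longrightarrow> (\<Sum>j<n. V l j) = 0"
    and ge: "(\<Sum>l<r. (s l)\<^sup>2) \<le> (\<Sum>a<p. \<Sum>b<r. (\<Sum>j<n. A a j * X b j)\<^sup>2)"
  shows "b < r \<Longrightarrow> (\<Sum>j<n. X b j) = 0"
proof -
  assume b: "b < r"
  have "0 < s (r - 1)" using spos[of "r-1"] rpos rk by simp
  hence pos: "0 < (s (r - 1))\<^sup>2" by simp
  have "(s (r - 1))\<^sup>2 * (real r - (\<Sum>l<k. w l)) \<le> 0" using bound gform ge by linarith
  hence le0: "real r - (\<Sum>l<k. w l) \<le> 0" using pos by (simp add: mult_le_0_iff)
  define F where "F b = (\<Sum>j<n. (X b j - (\<Sum>l<k. (\<Sum>j<n. V l j * X b j) * V l j))\<^sup>2)" for b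
  have Fnn: "0 \<le> F b" for b unfolding F_def by (intro sum_nonneg) auto
  have "(\<Sum>b<r. F b) = real r - (\<Sum>l<k. w l)" using wsum unfolding F_def by simp
  moreover have "0 \<le> (\<Sum>b<r. F b)" using Fnn by (simp add: sum_nonneg)
  ultimately have "(\<Sum>b<r. F b) = 0" using le0 by linarith
  hence "\<forall>b\<in>{..<r}. F b = 0"
    using sum_nonneg_eq_0_iff[of "{..<r}" F] Fnn by blast
  hence "F b = 0" using b by blast
  define G where "G j = (X b j - (\<Sum>l<k. (\<Sum>j<n. V l j * X b j) * V l j))\<^sup>2" for j
  have Gnn: "\<forall>j\<in>{..<n}. 0 \<le> G j" unfolding G_def by simp
  have "sum G {..<n} = 0" using \<open>F b = 0\<close> unfolding F_def G_def .
  hence G0: "\<forall>j\<in>{..<n}. G j = 0" using sum_nonneg_eq_0_iff[of "{..<n}" G] Gnn by blast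
  have xe: "X b j = (\<Sum>l<k. (\<Sum>j<n. V l j * X b j) * V l j)" if j: "j < n" for j
  proof -
    have "G j = 0" using G0 j by blast
    thus ?thesis unfolding G_def by (rule sq0)
  qed
  have "(\<Sum>j<n. X b j) = (\<Sum>j<n. \<Sum>l<k. (\<Sum>j<n. V l j * X b j) * V l j)"
    by (rule sum.cong[OF refl]) (rule xe, simp)
  also have "\<dots> = (\<Sum>l<k. (\<Sum>j<n. V l j * X b j) * (\<Sum>j<n. V l j))"
    by (subst sum.swap) (simp add: sum_distrib_left)
  also have "\<dots> = 0" by (simp add: Vc)
  finally show ?thesis .
qed

end


lemma orth_iff:
  assumes "Y \<in> carrier_mat m n"
  shows "(Y * transpose_mat Y = 1\<^sub>m m) \<longleftrightarrow>
         (\<forall>b<m. \<forall>c<m. (\<Sum>j<n. Y $$ (b,j) * Y $$ (c,j)) = (if b = c then 1 else 0))"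
proof
  assume h: "Y * transpose_mat Y = 1\<^sub>m m"
  show "\<forall>b<m. \<forall>c<m. (\<Sum>j<n. Y $$ (b,j) * Y $$ (c,j)) = (if b = c then 1 else 0)"
  proof (intro allI impI)
    fix b c assume bc: "b < m" "c < m"
    have "(Y * transpose_mat Y) $$ (b,c) = 1\<^sub>m m $$ (b,c)" using h by simp
    thus "(\<Sum>j<n. Y $$ (b,j) * Y $$ (c,j)) = (if b = c then 1 else 0)"
      using bc assms by (simp add: scalar_prod_def atLeast0LessThan)
  qed
next
  assume h: "\<forall>b<m. \<forall>c<m. (\<Sum>j<n. Y $$ (b,j) * Y $$ (c,j)) = (if b = c then 1 else 0)"
  show "Y * transpose_mat Y = 1\<^sub>m m"
    by (rule eq_matI) (use h assms in \<open>auto simp: scalar_prod_def atLeast0LessThan\<close>)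
qed

lemma frob_sub:
  assumes "A \<in> carrier_mat p n" "D \<in> carrier_mat p r" "X \<in> carrier_mat r n"
  shows "frob_sq (A - D * X) = (\<Sum>a<p. \<Sum>j<n. (A $$ (a,j) - (\<Sum>b<r. D $$ (a,b) * X $$ (b,j)))\<^sup>2)"
  unfolding frob_sq_def using assms
  by (intro sum.cong refl) (auto simp: scalar_prod_def atLeast0LessThan)

lemma trace_form:
  assumes "Y \<in> carrier_mat m n" "L \<in> carrier_mat n n"
  shows "mtrace (Y * L * transpose_mat Y) = (\<Sum>b<m. \<Sum>i<n. \<Sum>j<n. Y $$ (b,i) * L $$ (i,j) * Y $$ (b,j))"
proof -
  have "mtrace (Y * L * transpose_mat Y) = (\<Sum>b<m. \<Sum>i<n. Y $$ (b,i) * (\<Sum>j<n. L $$ (i,j) * Y $$ (b,j)))"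
    unfolding mtrace_def using assms
    by (intro sum.cong refl) (auto simp: scalar_prod_def atLeast0LessThan)
  also have "\<dots> = (\<Sum>b<m. \<Sum>i<n. \<Sum>j<n. Y $$ (b,i) * L $$ (i,j) * Y $$ (b,j))"
    by (intro sum.cong refl) (simp add: sum_distrib_left mult.assoc)
  finally show ?thesis .
qed

lemma mult_entry:
  assumes "A \<in> carrier_mat p n" "X \<in> carrier_mat r n" "a < p" "b < r"
  shows "(A * transpose_mat X) $$ (a,b) = (\<Sum>j<n. A $$ (a,j) * X $$ (b,j))"
  using assms by (simp add: scalar_prod_def atLeast0LessThan)



lemma quad:
  fixes y :: "nat \<Rightarrow> real" and B :: "nat \<Rightarrow> nat \<Rightarrow> real"
  shows "(\<Sum>i<n. \<Sum>j<n. y i * ((if i = j then c else 0) - (\<beta> + (\<Sum>a<p. B a i * B a j))) * y j)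
     = c * (\<Sum>i<n. (y i)\<^sup>2) - \<beta> * (\<Sum>i<n. y i)\<^sup>2 - (\<Sum>a<p. (\<Sum>j<n. B a j * y j)\<^sup>2)"
proof -
  have e1: "(\<Sum>i<n. \<Sum>j<n. y i * (if i = j then c else 0) * y j) = c * (\<Sum>i<n. (y i)\<^sup>2)"
  proof -
    have "\<And>i. (\<Sum>j<n. y i * (if i = j then c else 0) * y j) = (\<Sum>j<n. if i = j then c * y i * y i else 0)"
      by (intro sum.cong refl) auto
    hence "(\<Sum>i<n. \<Sum>j<n. y i * (if i = j then c else 0) * y j) = (\<Sum>i<n. c * (y i)\<^sup>2)"
      by (simp add: sum.delta power2_eq_square mult.assoc)
    thus ?thesis by (simp add: sum_distrib_left)
  qed
  have e2: "(\<Sum>i<n. \<Sum>j<n. y i * \<beta> * y j) = \<beta> * (\<Sum>i<n. y i)\<^sup>2"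
    by (simp add: power2_eq_square sum_product sum_distrib_left mult.commute mult.left_commute)
  have e3: "(\<Sum>i<n. \<Sum>j<n. y i * (\<Sum>a<p. B a i * B a j) * y j) = (\<Sum>a<p. (\<Sum>j<n. B a j * y j)\<^sup>2)"
  proof -
    have "(\<Sum>i<n. \<Sum>j<n. y i * (\<Sum>a<p. B a i * B a j) * y j) = (\<Sum>i<n. \<Sum>j<n. \<Sum>a<p. (B a i * y i) * (B a j * y j))"
      by (simp add: sum_distrib_left sum_distrib_right mult.commute mult.left_commute)
    also have "\<dots> = (\<Sum>i<n. \<Sum>a<p. \<Sum>j<n. (B a i * y i) * (B a j * y j))"
      by (rule sum.cong[OF refl]) (rule sum.swap)
    also have "\<dots> = (\<Sum>a<p. \<Sum>i<n. \<Sum>j<n. (B a i * y i) * (B a j * y j))"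
      by (rule sum.swap)
    also have "\<dots> = (\<Sum>a<p. (\<Sum>j<n. B a j * y j)\<^sup>2)"
      by (simp add: power2_eq_square sum_product)
    finally show ?thesis .
  qed
  have "(\<Sum>i<n. \<Sum>j<n. y i * ((if i = j then c else 0) - (\<beta> + (\<Sum>a<p. B a i * B a j))) * y j)
     = (\<Sum>i<n. \<Sum>j<n. y i * (if i = j then c else 0) * y j) - (\<Sum>i<n. \<Sum>j<n. y i * \<beta> * y j)
       - (\<Sum>i<n. \<Sum>j<n. y i * (\<Sum>a<p. B a i * B a j) * y j)"
    by (simp add: algebra_simps sum_subtractf sum.distrib)
  thus ?thesis using e1 e2 e3 by simp
qed

lemma frob_D:
  assumes A: "A \<in> carrier_mat p n" and D: "D \<in> carrier_mat p r" and X: "X \<in> carrier_mat r n"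
    and Xo: "\<And>b c. b < r \<Longrightarrow> c < r \<Longrightarrow> (\<Sum>j<n. X $$ (b,j) * X $$ (c,j)) = (if b = c then 1 else 0)"
  shows "frob_sq (A - D * X) = (\<Sum>a<p. \<Sum>j<n. (A $$ (a,j))\<^sup>2)
      - (\<Sum>a<p. \<Sum>b<r. (\<Sum>j<n. A $$ (a,j) * X $$ (b,j))\<^sup>2)
      + (\<Sum>a<p. \<Sum>b<r. (D $$ (a,b) - (\<Sum>j<n. A $$ (a,j) * X $$ (b,j)))\<^sup>2)"
proof -
  have "frob_sq (A - D * X) = (\<Sum>a<p. (\<Sum>j<n. (A $$ (a,j))\<^sup>2)
      - (\<Sum>b<r. (\<Sum>j<n. A $$ (a,j) * X $$ (b,j))\<^sup>2)
      + (\<Sum>b<r. (D $$ (a,b) - (\<Sum>j<n. A $$ (a,j) * X $$ (b,j)))\<^sup>2))"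
    unfolding frob_sub[OF A D X]
    using proj_expand[where e="\<lambda>b j. X $$ (b,j)" and r=r and n=n, OF Xo]
    by (simp add: mult.commute)
  thus ?thesis by (simp add: sum.distrib sum_subtractf)
qed



theorem proposition1:
  fixes A U S V :: "real mat" and p n r :: nat
  assumes "A \<in> carrier_mat p n"
    and "A *\<^sub>v ones_vec n = 0\<^sub>v p"
    and "0 < r" and "r \<le> vec_space.rank p A"
    and "compact_svd p n A U S V"
  shows "(\<forall>i<n. \<forall>j<n. 0 \<le> (transpose_mat (A_tilde A) * A_tilde A) $$ (i,j))
       \<and> (\<forall>i<n. \<forall>j<n. (transpose_mat (A_tilde A) * A_tilde A) $$ (i,j)
                         = col A i \<bullet> col A j + beta_of A)
       \<and> (\<forall>X. pca_solution p n r A X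
               \<longleftrightarrow> le_solution n r (graph_laplacian (transpose_mat (A_tilde A) * A_tilde A)) X)
       \<and> pca_solution p n r A (first_rows r V)
       \<and> le_solution n r (graph_laplacian (transpose_mat (A_tilde A) * A_tilde A)) (first_rows r V)"
proof -
  note A = assms(1)
  define k where "k = vec_space.rank p A"
  have svd: "U \<in> carrier_mat p k" "S \<in> carrier_mat k k" "V \<in> carrier_mat k n"
      "transpose_mat U * U = 1\<^sub>m k" "V * transpose_mat V = 1\<^sub>m k"
      "\<And>i j. i<k \<Longrightarrow> j<k \<Longrightarrow> i \<noteq> j \<Longrightarrow> S $$ (i,j) = 0"
      "\<And>i. i<k \<Longrightarrow> S $$ (i,i) > 0"
      "\<And>i j. i<k \<Longrightarrow> j<k \<Longrightarrow> i \<le> j \<Longrightarrow> S $$ (j,j) \<le> S $$ (i,i)"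
      "A = U * S * V"
    using assms(5) unfolding compact_svd_def k_def Let_def by auto
  have rk: "r \<le> k" "0 < r" using assms(3,4) k_def by auto
  define s where "s l = S $$ (l,l)" for l
  have UtU: "(\<Sum>a<p. U $$ (a,l) * U $$ (a,m)) = (if l = m then 1 else 0)" if "l < k" "m < k" for l m
  proof -
    have "(transpose_mat U * U) $$ (l,m) = 1\<^sub>m k $$ (l,m)" using svd(4) by simp
    thus ?thesis using that svd(1) by (simp add: scalar_prod_def atLeast0LessThan)
  qed
  have VVt: "(\<Sum>j<n. V $$ (l,j) * V $$ (m,j)) = (if l = m then 1 else 0)" if "l < k" "m < k" for l m
    using orth_iff[OF svd(3)] svd(5) that by blast
  have US: "(U * S) $$ (a,m) = U $$ (a,m) * s m" if "a < p" "m < k" for a m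
  proof -
    have "(U * S) $$ (a,m) = (\<Sum>l<k. U $$ (a,l) * S $$ (l,m))"
      using that svd(1,2) by (simp add: scalar_prod_def atLeast0LessThan)
    also have "\<dots> = (\<Sum>l<k. if l = m then U $$ (a,m) * s m else 0)"
      using that svd(6) unfolding s_def by (intro sum.cong refl) auto
    also have "\<dots> = U $$ (a,m) * s m" using that by simp
    finally show ?thesis .
  qed
  have Aent: "A $$ (a,j) = (\<Sum>l<k. U $$ (a,l) * s l * V $$ (l,j))" if "a < p" "j < n" for a j
  proof -
    have "A $$ (a,j) = (U * S * V) $$ (a,j)" using svd(9) by simp
    also have "\<dots> = (\<Sum>l<k. U $$ (a,l) * (\<Sum>m<k. S $$ (l,m) * V $$ (m,j)))"
      using that svd(1,2,3) by (simp add: scalar_prod_def atLeast0LessThan)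
    also have "\<dots> = (\<Sum>l<k. U $$ (a,l) * s l * V $$ (l,j))"
    proof (rule sum.cong[OF refl])
      fix l assume l: "l \<in> {..<k}"
      have "(\<Sum>m<k. S $$ (l,m) * V $$ (m,j)) = (\<Sum>m<k. if l = m then s l * V $$ (l,j) else 0)"
        using l svd(6) unfolding s_def by (intro sum.cong refl) auto
      also have "\<dots> = s l * V $$ (l,j)" using l by simp
      finally show "U $$ (a,l) * (\<Sum>m<k. S $$ (l,m) * V $$ (m,j)) = U $$ (a,l) * s l * V $$ (l,j)"
        by simp
    qed
    finally show ?thesis .
  qed
  have spos: "0 < s l" if "l < k" for l using svd(7) that s_def by simp
  have sdesc: "s j \<le> s i" if "i \<le> j" "j < k" for i j using svd(8)[of i j] that s_def by simp
  have npos: "0 < n"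
  proof (rule ccontr)
    assume "\<not> 0 < n"
    hence "n = 0" by simp
    thus False using VVt[of 0 0] rk by simp
  qed
  have Arow: "(\<Sum>j<n. A $$ (a,j)) = 0" if "a < p" for a
  proof -
    have "(A *\<^sub>v ones_vec n) $ a = 0\<^sub>v p $ a" using assms(2) by simp
    thus ?thesis using that A by (simp add: scalar_prod_def atLeast0LessThan ones_vec_def)
  qed
  have Vc: "(\<Sum>j<n. V $$ (m,j)) = 0" if m: "m < k" for m
  proof -
    have "0 = (\<Sum>a<p. U $$ (a,m) * (\<Sum>j<n. A $$ (a,j)))" by (simp add: Arow)
    also have "\<dots> = (\<Sum>a<p. \<Sum>j<n. \<Sum>l<k. U $$ (a,m) * U $$ (a,l) * (s l * V $$ (l,j)))"
      by (intro sum.cong refl) (simp add: Aent sum_distrib_left mult.assoc)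
    also have "\<dots> = (\<Sum>j<n. \<Sum>a<p. \<Sum>l<k. U $$ (a,m) * U $$ (a,l) * (s l * V $$ (l,j)))"
      by (rule sum.swap)
    also have "\<dots> = (\<Sum>j<n. \<Sum>l<k. \<Sum>a<p. U $$ (a,m) * U $$ (a,l) * (s l * V $$ (l,j)))"
      by (rule sum.cong[OF refl]) (rule sum.swap)
    also have "\<dots> = (\<Sum>l<k. \<Sum>j<n. \<Sum>a<p. U $$ (a,m) * U $$ (a,l) * (s l * V $$ (l,j)))"
      by (rule sum.swap)
    also have "\<dots> = (\<Sum>l<k. (\<Sum>a<p. U $$ (a,m) * U $$ (a,l)) * (s l * (\<Sum>j<n. V $$ (l,j))))"
      by (simp add: sum_distrib_left sum_distrib_right)
    also have "\<dots> = (\<Sum>l<k. if m = l then s l * (\<Sum>j<n. V $$ (l,j)) else 0)"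
      using m by (intro sum.cong refl) (simp add: UtU)
    also have "\<dots> = s m * (\<Sum>j<n. V $$ (m,j))" using m by simp
    finally show ?thesis using spos[OF m] by simp
  qed
  define orth where "orth X \<longleftrightarrow> (\<forall>b<r. \<forall>c<r. (\<Sum>j<n. X $$ (b,j) * X $$ (c,j)) = (if b = c then 1 else (0::real)))" for X
  define cen where "cen X \<longleftrightarrow> (\<forall>b<r. (\<Sum>j<n. X $$ (b,j)) = (0::real))" for X
  define g where "g X = (\<Sum>a<p. \<Sum>b<r. (\<Sum>j<n. A $$ (a,j) * X $$ (b,j))\<^sup>2)" for X
  define T where "T = (\<Sum>l<r. (s l)\<^sup>2)"
  have kfI: "kf (\<lambda>a j. A $$ (a,j)) (\<lambda>a l. U $$ (a,l)) (\<lambda>l j. V $$ (l,j)) (\<lambda>b j. X $$ (b,j)) s p n k r"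
    if "orth X" for X
    using that unfolding orth_def by (intro kf.intro) (auto simp: UtU VVt Aent spos sdesc rk)
  have P1: "g X \<le> T" if "orth X" for X
    using kf.kyfan[OF kfI[OF that]] unfolding g_def T_def .
  have P2: "cen X" if "orth X" "T \<le> g X" for X
    using kf.kyfan_eq[OF kfI[OF that(1)], OF Vc] that(2) unfolding cen_def g_def T_def by blast
  define Vr where "Vr = first_rows r V"
  have Vr_carr: "Vr \<in> carrier_mat r n" unfolding Vr_def first_rows_def using svd(3) by auto
  have Vr_ent: "Vr $$ (b,j) = V $$ (b,j)" if "b < r" "j < n" for b j
    unfolding Vr_def first_rows_def using svd(3) that by auto
  have Vr_orth: "orth Vr" unfolding orth_def using VVt rk by (auto simp: Vr_ent)
  have Vr_cen: "cen Vr" unfolding cen_def using Vc rk by (auto simp: Vr_ent)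
  have V_orth: "orth V" unfolding orth_def using VVt rk by auto
  have Vr_g: "g Vr = T"
  proof -
    have "g Vr = g V" unfolding g_def by (intro sum.cong refl) (simp add: Vr_ent)
    also have "\<dots> = (\<Sum>l<k. (s l)\<^sup>2 * (\<Sum>b<r. (\<Sum>j<n. V $$ (l,j) * V $$ (b,j))\<^sup>2))"
      using kf.gform[OF kfI[OF V_orth]] unfolding g_def kf.w_def[OF kfI[OF V_orth]] .
    also have "\<dots> = (\<Sum>l<k. (s l)\<^sup>2 * (if l < r then 1 else 0))"
    proof (rule sum.cong[OF refl])
      fix l assume l: "l \<in> {..<k}"
      have "(\<Sum>b<r. (\<Sum>j<n. V $$ (l,j) * V $$ (b,j))\<^sup>2) = (\<Sum>b<r. if l = b then 1 else 0)"
        using l rk by (intro sum.cong refl) (auto simp: VVt)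
      thus "(s l)\<^sup>2 * (\<Sum>b<r. (\<Sum>j<n. V $$ (l,j) * V $$ (b,j))\<^sup>2) = (s l)\<^sup>2 * (if l < r then 1 else 0)"
        by simp
    qed
    also have "\<dots> = (\<Sum>l\<in>{..<k} \<inter> {..<r}. (s l)\<^sup>2)"
      by (subst sum.inter_restrict) (simp_all, intro sum.cong refl, simp)
    also have "{..<k} \<inter> {..<r} = {..<r}" using rk by auto
    finally show ?thesis unfolding T_def .
  qed
  define FA where "FA = (\<Sum>a<p. \<Sum>j<n. (A $$ (a,j))\<^sup>2)"
  define D0 where "D0 X = mat p r (\<lambda>(a,b). \<Sum>j<n. A $$ (a,j) * X $$ (b,j))" for X :: "real mat"
  have D0c: "D0 X \<in> carrier_mat p r" for X unfolding D0_def by simp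
  have frobD: "frob_sq (A - D * X) = FA - g X + (\<Sum>a<p. \<Sum>b<r. (D $$ (a,b) - (\<Sum>j<n. A $$ (a,j) * X $$ (b,j)))\<^sup>2)"
    if "D \<in> carrier_mat p r" "X \<in> carrier_mat r n" "orth X" for D X
    using frob_D[OF A that(1,2)] that(3) unfolding orth_def FA_def g_def by blast
  have frob_ge: "FA - g X \<le> frob_sq (A - D * X)"
    if "D \<in> carrier_mat p r" "X \<in> carrier_mat r n" "orth X" for D X
    unfolding frobD[OF that] by (simp add: sum_nonneg)
  have frob_eq: "frob_sq (A - D0 X * X) = FA - g X"
    if "X \<in> carrier_mat r n" "orth X" for X
    unfolding frobD[OF D0c that] by (simp add: D0_def)
  have orthM: "X * transpose_mat X = 1\<^sub>m r \<longleftrightarrow> orth X" if "X \<in> carrier_mat r n" for X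
    using orth_iff[OF that] unfolding orth_def by simp
  have pca_iff: "pca_solution p n r A X \<longleftrightarrow> X \<in> carrier_mat r n \<and> orth X \<and> g X = T" for X
  proof
    assume h: "pca_solution p n r A X"
    hence X: "X \<in> carrier_mat r n" and oX: "orth X" using orthM unfolding pca_solution_def by auto
    from h obtain D where D: "D \<in> carrier_mat p r" and
      mn: "\<And>D' (X'::real mat). D' \<in> carrier_mat p r \<Longrightarrow> X' \<in> carrier_mat r n \<Longrightarrow> X' * transpose_mat X' = 1\<^sub>m r
         \<Longrightarrow> frob_sq (A - D * X) \<le> frob_sq (A - D' * X')"
      unfolding pca_solution_def by blast
    have "FA - g X \<le> frob_sq (A - D * X)" by (rule frob_ge[OF D X oX])
    also have "\<dots> \<le> frob_sq (A - D0 Vr * Vr)"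
      using mn[OF D0c Vr_carr] orthM[OF Vr_carr] Vr_orth by blast
    also have "\<dots> = FA - T" using frob_eq[OF Vr_carr Vr_orth] Vr_g by simp
    finally have "T \<le> g X" by simp
    thus "X \<in> carrier_mat r n \<and> orth X \<and> g X = T" using X oX P1[OF oX] by simp
  next
    assume h: "X \<in> carrier_mat r n \<and> orth X \<and> g X = T"
    show "pca_solution p n r A X" unfolding pca_solution_def
    proof (intro conjI bexI[of _ "D0 X"] ballI impI)
      show "X \<in> carrier_mat r n" using h by simp
      show "X * transpose_mat X = 1\<^sub>m r" using h orthM by blast
      show "D0 X \<in> carrier_mat p r" by (rule D0c)
      fix D' X' :: "real mat" assume D': "D' \<in> carrier_mat p r" and X': "X' \<in> carrier_mat r n"
        and o': "X' * transpose_mat X' = 1\<^sub>m r"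
      have oX': "orth X'" using o' orthM[OF X'] by simp
      have "frob_sq (A - D0 X * X) = FA - T" using frob_eq h by simp
      also have "\<dots> \<le> FA - g X'" using P1[OF oX'] by simp
      also have "\<dots> \<le> frob_sq (A - D' * X')" by (rule frob_ge[OF D' X' oX'])
      finally show "frob_sq (A - D0 X * X) \<le> frob_sq (A - D' * X')" .
    qed
  qed
  define Mq where "Mq i j = (\<Sum>a<p. A $$ (a,i) * A $$ (a,j))" for i j
  have AtA: "(transpose_mat A * A) $$ (i,j) = Mq i j" if "i < n" "j < n" for i j
    using that A unfolding Mq_def by (simp add: scalar_prod_def atLeast0LessThan)
  define Bs where "Bs = {(transpose_mat A * A) $$ (i,j) | i j. i < dim_col A \<and> j < dim_col A}"
  have dcA: "dim_col A = n" "dim_row A = p" using A by auto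
  have Bs_fin: "finite Bs"
  proof -
    have "Bs \<subseteq> (\<lambda>(i,j). (transpose_mat A * A) $$ (i,j)) ` ({..<n} \<times> {..<n})"
      unfolding Bs_def dcA by auto
    thus ?thesis by (rule finite_subset) simp
  qed
  have Bs_mem: "Mq i j \<in> Bs" if "i < n" "j < n" for i j
    unfolding Bs_def dcA using that AtA[OF that, symmetric] by blast
  define \<beta> where "\<beta> = beta_of A"
  have beta_eq: "\<beta> = - Min Bs" unfolding \<beta>_def beta_of_def Bs_def ..
  have Mge: "- \<beta> \<le> Mq i j" if "i < n" "j < n" for i j
    using Min_le[OF Bs_fin Bs_mem[OF that]] beta_eq by simp
  have Mrow: "(\<Sum>j<n. Mq i j) = 0" for i
  proof -
    have "(\<Sum>j<n. Mq i j) = (\<Sum>a<p. A $$ (a,i) * (\<Sum>j<n. A $$ (a,j)))"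
      unfolding Mq_def by (simp add: sum_distrib_left sum.swap[of _ "{..<n}"])
    also have "\<dots> = 0" by (simp add: Arow)
    finally show ?thesis .
  qed
  have beta_nn: "0 \<le> \<beta>"
  proof -
    have "\<exists>j<n. Mq 0 j \<le> 0"
    proof (rule ccontr)
      assume "\<not> (\<exists>j<n. Mq 0 j \<le> 0)"
      hence "\<forall>j\<in>{..<n}. 0 < Mq 0 j" by auto
      hence "0 < (\<Sum>j<n. Mq 0 j)" using npos by (intro sum_pos) auto
      thus False using Mrow by simp
    qed
    then obtain j where "j < n" "Mq 0 j \<le> 0" by blast
    thus ?thesis using Min_le[OF Bs_fin Bs_mem[OF npos \<open>j < n\<close>]] beta_eq by simp
  qed
  define At where "At = A_tilde A"
  have At_c: "At \<in> carrier_mat (p+1) n" unfolding At_def A_tilde_def dcA by simp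
  have At0: "At $$ (0,j) = sqrt \<beta>" if "j < n" for j
    unfolding At_def A_tilde_def \<beta>_def using that dcA by simp
  have AtS: "At $$ (Suc a,j) = A $$ (a,j)" if "a < p" "j < n" for a j
    unfolding At_def A_tilde_def using that dcA by simp
  define W where "W = transpose_mat At * At"
  have W_c: "W \<in> carrier_mat n n" unfolding W_def using At_c by simp
  have W_ent: "W $$ (i,j) = \<beta> + Mq i j" if "i < n" "j < n" for i j
  proof -
    have "W $$ (i,j) = (\<Sum>x<Suc p. At $$ (x,i) * At $$ (x,j))"
      unfolding W_def using At_c that by (simp add: scalar_prod_def atLeast0LessThan)
    also have "\<dots> = sqrt \<beta> * sqrt \<beta> + Mq i j"
      unfolding sum.lessThan_Suc_shift Mq_def using that by (simp add: At0 AtS)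
    also have "\<dots> = \<beta> + Mq i j" using beta_nn by simp
    finally show ?thesis .
  qed
  have colA: "col A i \<bullet> col A j = Mq i j" if "i < n" "j < n" for i j
    unfolding Mq_def using that A by (simp add: scalar_prod_def atLeast0LessThan)
  have C1: "\<forall>i<n. \<forall>j<n. 0 \<le> W $$ (i,j)" using W_ent Mge by fastforce
  have C2: "\<forall>i<n. \<forall>j<n. W $$ (i,j) = col A i \<bullet> col A j + \<beta>" using W_ent colA by simp
  define L where "L = graph_laplacian W"
  have Wrow: "(W *\<^sub>v ones_vec n) $ i = real n * \<beta>" if "i < n" for i
  proof -
    have "(W *\<^sub>v ones_vec n) $ i = (\<Sum>j<n. W $$ (i,j))"
      using W_c that by (simp add: scalar_prod_def atLeast0LessThan ones_vec_def)
    also have "\<dots> = (\<Sum>j<n. \<beta> + Mq i j)" using that by (intro sum.cong refl) (simp add: W_ent)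
    also have "\<dots> = real n * \<beta>" by (simp add: sum.distrib Mrow)
    finally show ?thesis .
  qed
  have L_c: "L \<in> carrier_mat n n" unfolding L_def graph_laplacian_def using W_c
    by (simp add: minus_carrier_mat)
  have L_ent: "L $$ (i,j) = (if i = j then real n * \<beta> else 0) - (\<beta> + (\<Sum>a<p. A $$ (a,i) * A $$ (a,j)))"
    if "i < n" "j < n" for i j
    unfolding L_def graph_laplacian_def using W_c that Wrow[OF that(2)]
    by (simp add: mat_diag_def W_ent Mq_def)
  define Xt where "Xt X = X_tilde n X" for X
  have Xt_c: "Xt X \<in> carrier_mat (r+1) n" if "X \<in> carrier_mat r n" for X
    unfolding Xt_def X_tilde_def using that by simp
  have Xt0: "Xt X $$ (0,j) = 1 / sqrt (real n)" if "X \<in> carrier_mat r n" "j < n" for X j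
    unfolding Xt_def X_tilde_def using that by simp
  have XtS: "Xt X $$ (Suc b,j) = X $$ (b,j)" if "X \<in> carrier_mat r n" "b < r" "j < n" for X b j
    unfolding Xt_def X_tilde_def using that by simp
  have sq_n: "(\<Sum>j<n. (1 / sqrt (real n))\<^sup>2) = 1" using npos by (simp add: power_divide)
  have trq: "mtrace (Xt X * L * transpose_mat (Xt X)) =
      (\<Sum>b<Suc r. real n * \<beta> * (\<Sum>i<n. (Xt X $$ (b,i))\<^sup>2) - \<beta> * (\<Sum>i<n. Xt X $$ (b,i))\<^sup>2
          - (\<Sum>a<p. (\<Sum>j<n. A $$ (a,j) * Xt X $$ (b,j))\<^sup>2))"
    if X: "X \<in> carrier_mat r n" for X
  proof -
    have "mtrace (Xt X * L * transpose_mat (Xt X)) = (\<Sum>b<Suc r. \<Sum>i<n. \<Sum>j<n. Xt X $$ (b,i) * L $$ (i,j) * Xt X $$ (b,j))"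
      using trace_form[OF Xt_c[OF X] L_c] by simp
    also have "\<dots> = (\<Sum>b<Suc r. \<Sum>i<n. \<Sum>j<n. Xt X $$ (b,i) * ((if i = j then real n * \<beta> else 0) - (\<beta> + (\<Sum>a<p. A $$ (a,i) * A $$ (a,j)))) * Xt X $$ (b,j))"
      by (intro sum.cong refl) (simp add: L_ent)
    also have "\<dots> = (\<Sum>b<Suc r. real n * \<beta> * (\<Sum>i<n. (Xt X $$ (b,i))\<^sup>2) - \<beta> * (\<Sum>i<n. Xt X $$ (b,i))\<^sup>2
          - (\<Sum>a<p. (\<Sum>j<n. A $$ (a,j) * Xt X $$ (b,j))\<^sup>2))"
      by (rule sum.cong[OF refl]) (rule quad)
    finally show ?thesis .
  qed
  have tr: "mtrace (Xt X * L * transpose_mat (Xt X)) = real n * \<beta> * real r - g X"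
    if X: "X \<in> carrier_mat r n" and oX: "orth X" and cX: "cen X" for X
  proof -
    have r0: "real n * \<beta> * (\<Sum>i<n. (Xt X $$ (0,i))\<^sup>2) - \<beta> * (\<Sum>i<n. Xt X $$ (0,i))\<^sup>2
          - (\<Sum>a<p. (\<Sum>j<n. A $$ (a,j) * Xt X $$ (0,j))\<^sup>2) = 0"
    proof -
      have e1: "(\<Sum>i<n. (Xt X $$ (0,i))\<^sup>2) = 1" using sq_n by (simp add: Xt0[OF X])
      have e2: "(\<Sum>i<n. Xt X $$ (0,i)) = real n / sqrt (real n)" by (simp add: Xt0[OF X])
      have e2': "(real n / sqrt (real n))\<^sup>2 = real n" using npos by (simp add: power_divide power2_eq_square)
      have e3: "(\<Sum>j<n. A $$ (a,j) * Xt X $$ (0,j)) = 0" if "a < p" for a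
      proof -
        have "(\<Sum>j<n. A $$ (a,j) * Xt X $$ (0,j)) = (\<Sum>j<n. A $$ (a,j)) * (1 / sqrt (real n))"
          by (simp add: Xt0[OF X] sum_divide_distrib)
        thus ?thesis using Arow[OF that] by simp
      qed
      show ?thesis using e1 e2 e2' e3 by simp
    qed
    have rS: "real n * \<beta> * (\<Sum>i<n. (Xt X $$ (Suc b,i))\<^sup>2) - \<beta> * (\<Sum>i<n. Xt X $$ (Suc b,i))\<^sup>2
          - (\<Sum>a<p. (\<Sum>j<n. A $$ (a,j) * Xt X $$ (Suc b,j))\<^sup>2)
          = real n * \<beta> - (\<Sum>a<p. (\<Sum>j<n. A $$ (a,j) * X $$ (b,j))\<^sup>2)" if b: "b < r" for b
    proof -
      have "(\<Sum>i<n. (Xt X $$ (Suc b,i))\<^sup>2) = 1"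
        using oX b unfolding orth_def by (simp add: XtS[OF X] power2_eq_square)
      moreover have "(\<Sum>i<n. Xt X $$ (Suc b,i)) = 0"
        using cX b unfolding cen_def by (simp add: XtS[OF X])
      moreover have "(\<Sum>a<p. (\<Sum>j<n. A $$ (a,j) * Xt X $$ (Suc b,j))\<^sup>2) = (\<Sum>a<p. (\<Sum>j<n. A $$ (a,j) * X $$ (b,j))\<^sup>2)"
        using b by (simp add: XtS[OF X])
      ultimately show ?thesis by simp
    qed
    show ?thesis unfolding trq[OF X] sum.lessThan_Suc_shift r0
      by (simp add: rS sum_subtractf g_def sum.swap[of _ "{..<p}"])
  qed
  have XtI: "(Xt X * transpose_mat (Xt X) = 1\<^sub>m (r+1)) \<longleftrightarrow> orth X \<and> cen X"
    if X: "X \<in> carrier_mat r n" for X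
  proof -
    have sqn: "sqrt (real n) \<noteq> 0" using npos by simp
    have s00: "(\<Sum>j<n. Xt X $$ (0,j) * Xt X $$ (0,j)) = 1" using sq_n by (simp add: Xt0[OF X] power2_eq_square)
    have s0c: "(\<Sum>j<n. Xt X $$ (0,j) * Xt X $$ (Suc c,j)) = (\<Sum>j<n. X $$ (c,j)) / sqrt (real n)"
      if "c < r" for c using that by (simp add: Xt0[OF X] XtS[OF X] sum_divide_distrib)
    have sb0: "(\<Sum>j<n. Xt X $$ (Suc b,j) * Xt X $$ (0,j)) = (\<Sum>j<n. X $$ (b,j)) / sqrt (real n)"
      if "b < r" for b using that by (simp add: Xt0[OF X] XtS[OF X] sum_divide_distrib)
    have sbc: "(\<Sum>j<n. Xt X $$ (Suc b,j) * Xt X $$ (Suc c,j)) = (\<Sum>j<n. X $$ (b,j) * X $$ (c,j))"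
      if "b < r" "c < r" for b c using that by (simp add: XtS[OF X])
    have "(Xt X * transpose_mat (Xt X) = 1\<^sub>m (r+1)) \<longleftrightarrow>
      (\<forall>b<Suc r. \<forall>c<Suc r. (\<Sum>j<n. Xt X $$ (b,j) * Xt X $$ (c,j)) = (if b = c then 1 else 0))"
      using orth_iff[OF Xt_c[OF X]] by simp
    also have "\<dots> \<longleftrightarrow> (\<forall>c<r. (\<Sum>j<n. X $$ (c,j)) / sqrt (real n) = 0) \<and>
        (\<forall>b<r. (\<Sum>j<n. X $$ (b,j)) / sqrt (real n) = 0 \<and>
           (\<forall>c<r. (\<Sum>j<n. X $$ (b,j) * X $$ (c,j)) = (if b = c then 1 else 0)))"
      unfolding All_less_Suc2 by (simp add: s00 s0c sb0 sbc cong: conj_cong)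
    also have "\<dots> \<longleftrightarrow> orth X \<and> cen X"
      unfolding orth_def cen_def using sqn by auto
    finally show ?thesis .
  qed
  have le_iff: "le_solution n r L X \<longleftrightarrow> X \<in> carrier_mat r n \<and> orth X \<and> g X = T" for X
  proof
    assume h: "le_solution n r L X"
    hence X: "X \<in> carrier_mat r n" and oc: "orth X \<and> cen X"
      and mn: "\<And>X'. X' \<in> carrier_mat r n \<Longrightarrow> Xt X' * transpose_mat (Xt X') = 1\<^sub>m (r + 1) \<Longrightarrow>
          mtrace (Xt X * L * transpose_mat (Xt X)) \<le> mtrace (Xt X' * L * transpose_mat (Xt X'))"
      unfolding le_solution_def Xt_def[symmetric] using XtI by auto
    have "real n * \<beta> * real r - g X \<le> real n * \<beta> * real r - g Vr"
      using mn[OF Vr_carr] XtI[OF Vr_carr] Vr_orth Vr_cen tr[OF Vr_carr Vr_orth Vr_cen] tr[OF X] oc by simp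
    hence "T \<le> g X" using Vr_g by simp
    thus "X \<in> carrier_mat r n \<and> orth X \<and> g X = T" using X oc P1 by force
  next
    assume h: "X \<in> carrier_mat r n \<and> orth X \<and> g X = T"
    hence X: "X \<in> carrier_mat r n" and oX: "orth X" and gX: "g X = T" by auto
    have cX: "cen X" using P2[OF oX] gX by simp
    show "le_solution n r L X" unfolding le_solution_def Xt_def[symmetric]
    proof (intro conjI ballI impI)
      show "X \<in> carrier_mat r n" by (rule X)
      show "Xt X * transpose_mat (Xt X) = 1\<^sub>m (r + 1)" using XtI[OF X] oX cX by simp
      fix X' :: "real mat" assume X': "X' \<in> carrier_mat r n" and o': "Xt X' * transpose_mat (Xt X') = 1\<^sub>m (r + 1)"
      have oc': "orth X' \<and> cen X'" using XtI[OF X'] o' by simp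
      show "mtrace (Xt X * L * transpose_mat (Xt X)) \<le> mtrace (Xt X' * L * transpose_mat (Xt X'))"
        using tr[OF X oX cX] tr[OF X'] oc' P1 gX by force
    qed
  qed
  have L_eq: "graph_laplacian (transpose_mat (A_tilde A) * A_tilde A) = L"
    unfolding L_def W_def At_def ..
  show ?thesis unfolding L_eq
    using C1 C2 pca_iff le_iff Vr_carr Vr_orth Vr_g unfolding W_def At_def \<beta>_def Vr_def by blast
qed


end
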